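(* There exist a sequence of Pauli Hamiltonians $H_n=\sum_ic_i^{(n)}P_i^{(n)}$ and states $|\psi_n\rangle$ such that $$\frac{D_n(\psi_n)}{\mathrm{Var}(H_n)|_{\psi_n}}\longrightarrow0\quad(n\to\infty),$$ where $D_n(\psi)=\sum_i(c_i^{(n)})^2\,(1-\langle\psi|P_i^{(n)}|\psi\rangle^2)$ and $\mathrm{Var}(H_n)|_\psi=\langle\psi|H_n^2|\psi\rangle-\langle\psi|H_n|\psi\rangle^2$.
   Context: A Pauli Hamiltonian is $H=\sum_ic_iP_i$ with real coefficients and distinct $n$-qubit Pauli strings $P_i\in\{I,X,Y,Z\}^{\otimes n}$. *)

theory Defs
  imports Complex_Main
begin

datatype pauli = PI | PX | PY | PZ

text \<open>Single-qubit Pauli matrices; entry (row b', column b), with the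
computational basis |0> = False, |1> = True.\<close>
fun pauli_mat :: "pauli \<Rightarrow> bool \<Rightarrow> bool \<Rightarrow> complex" where
  "pauli_mat PI r c = (if r = c then 1 else 0)"
| "pauli_mat PX r c = (if r \<noteq> c then 1 else 0)"
| "pauli_mat PY r c = (if r = c then 0 else if r then \<i> else - \<i>)"
| "pauli_mat PZ r c = (if r = c then (if c then -1 else 1) else 0)"

definition bitstrings :: "nat \<Rightarrow> bool list set" where
  "bitstrings n = {xs. length xs = n}"

definition pauli_strings :: "nat \<Rightarrow> pauli list set" where
  "pauli_strings n = {ps. length ps = n}"

text \<open>Matrix entries of the tensor product P_1 \<otimes> ... \<otimes> P_n.\<close>
definition pstring_mat :: "pauli list \<Rightarrow> bool list \<Rightarrow> bool list \<Rightarrow> complex" where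
  "pstring_mat ps r c = (\<Prod>k<length ps. pauli_mat (ps ! k) (r ! k) (c ! k))"

text \<open>Pauli Hamiltonian H = sum over n-qubit Pauli strings P of c(P) P
  (distinct strings; absent strings have coefficient 0).\<close>
definition ham_mat :: "nat \<Rightarrow> (pauli list \<Rightarrow> real) \<Rightarrow> bool list \<Rightarrow> bool list \<Rightarrow> complex" where
  "ham_mat n c r s = (\<Sum>P\<in>pauli_strings n. complex_of_real (c P) * pstring_mat P r s)"

definition mat_mult :: "nat \<Rightarrow> (bool list \<Rightarrow> bool list \<Rightarrow> complex) \<Rightarrow> (bool list \<Rightarrow> bool list \<Rightarrow> complex)
    \<Rightarrow> bool list \<Rightarrow> bool list \<Rightarrow> complex" where
  "mat_mult n A B r s = (\<Sum>z\<in>bitstrings n. A r z * B z s)"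

definition expect :: "nat \<Rightarrow> (bool list \<Rightarrow> complex) \<Rightarrow> (bool list \<Rightarrow> bool list \<Rightarrow> complex) \<Rightarrow> complex" where
  "expect n \<psi> A = (\<Sum>r\<in>bitstrings n. \<Sum>s\<in>bitstrings n. cnj (\<psi> r) * A r s * \<psi> s)"

definition is_state :: "nat \<Rightarrow> (bool list \<Rightarrow> complex) \<Rightarrow> bool" where
  "is_state n \<psi> \<longleftrightarrow> (\<Sum>r\<in>bitstrings n. (cmod (\<psi> r))\<^sup>2) = 1"

text \<open>Var(H)|_psi = <psi|H^2|psi> - <psi|H|psi>^2 (real since H is Hermitian).\<close>
definition variance :: "nat \<Rightarrow> (pauli list \<Rightarrow> real) \<Rightarrow> (bool list \<Rightarrow> complex) \<Rightarrow> real" where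
  "variance n c \<psi> = Re (expect n \<psi> (mat_mult n (ham_mat n c) (ham_mat n c)))
                      - (Re (expect n \<psi> (ham_mat n c)))\<^sup>2"

definition Dquant :: "nat \<Rightarrow> (pauli list \<Rightarrow> real) \<Rightarrow> (bool list \<Rightarrow> complex) \<Rightarrow> real" where
  "Dquant n c \<psi> = (\<Sum>P\<in>pauli_strings n. (c P)\<^sup>2 * (1 - (Re (expect n \<psi> (pstring_mat P)))\<^sup>2))"

end

theory Submission
  imports Defs
begin


lemma fin_bits: "finite (bitstrings n)"
proof -
  have "bitstrings n = {xs. set xs \<subseteq> (UNIV::bool set) \<and> length xs = n}"
    by (auto simp: bitstrings_def)
  then show ?thesis using finite_lists_length_eq[of "UNIV::bool set" n] by simp
qed

lemma fin_ps: "finite (pauli_strings n)"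
proof -
  have "pauli_strings n = {xs. set xs \<subseteq> {PI,PX,PY,PZ} \<and> length xs = n}"
    by (auto simp: pauli_strings_def) (metis pauli.exhaust)
  then show ?thesis using finite_lists_length_eq[of "{PI,PX,PY,PZ}" n] by simp
qed

lemma offdiag:
  assumes "length P = n" "set P \<subseteq> {PI,PZ}" "length r = n" "length s = n" "r \<noteq> s"
  shows "pstring_mat P r s = 0"
proof -
  obtain k where k: "k < n" "r ! k \<noteq> s ! k"
    using assms nth_equalityI[of r s] by auto
  have "P ! k \<in> {PI,PZ}" using assms k nth_mem by blast
  then have "pauli_mat (P ! k) (r ! k) (s ! k) = 0" using k by auto
  then show ?thesis unfolding pstring_mat_def using k assms
    by (intro prod_zero) (auto intro!: bexI[of _ k])
qed

lemma diag_a: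
  assumes "length P = n" "set P \<subseteq> {PI,PZ}"
  shows "pstring_mat P (replicate n False) (replicate n False) = 1"
  unfolding pstring_mat_def using assms
  by (intro prod.neutral) (auto dest!: nth_mem)

lemma diag_b:
  assumes "set xs \<subseteq> {PI,PZ}"
  shows "pstring_mat (PZ # xs) (True # replicate (length xs) False) (True # replicate (length xs) False) = -1"
proof -
  have "pstring_mat (PZ # xs) (True # replicate (length xs) False) (True # replicate (length xs) False)
     = pauli_mat PZ True True * (\<Prod>k<length xs. pauli_mat (xs ! k) False False)"
    unfolding pstring_mat_def by (simp add: prod.lessThan_Suc_shift del: prod.lessThan_Suc)
  also have "(\<Prod>k<length xs. pauli_mat (xs ! k) False False) = 1"
    using assms by (intro prod.neutral) (auto dest!: nth_mem)
  finally show ?thesis by simp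
qed

lemma ab:
  shows "pstring_mat (PZ # xs) (replicate (Suc (length xs)) False) (True # replicate (length xs) False) = 0"
    "pstring_mat (PZ # xs) (True # replicate (length xs) False) (replicate (Suc (length xs)) False) = 0"
  unfolding pstring_mat_def by (intro prod_zero; force)+


lemma sum2:
  assumes "finite A" "a \<in> A" "b \<in> A" "a \<noteq> b"
  shows "(\<Sum>s\<in>A. if s = a \<or> s = b then g s else 0) = g a + g b"
proof -
  have "(\<Sum>s\<in>A. if s = a \<or> s = b then g s else 0) = sum g {s\<in>A. s = a \<or> s = b}"
    using assms(1) by (simp add: sum.inter_filter)
  also have "{s\<in>A. s = a \<or> s = b} = {a,b}" using assms by auto
  finally show ?thesis using assms by simp
qed

lemma expect_two:
  assumes "a \<in> bitstrings n" "b \<in> bitstrings n" "a \<noteq> b"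
  shows "expect n (\<lambda>r. if r = a \<or> r = b then v else 0) A
        = cnj v * v * (A a a + A a b + A b a + A b b)"
proof -
  have "expect n (\<lambda>r. if r = a \<or> r = b then v else 0) A
     = (\<Sum>r\<in>bitstrings n. if r = a \<or> r = b then
          (\<Sum>s\<in>bitstrings n. if s = a \<or> s = b then cnj v * A r s * v else 0) else 0)"
    unfolding expect_def by (intro sum.cong refl) (auto intro!: sum.cong)
  also have "\<dots> = (\<Sum>r\<in>bitstrings n. if r = a \<or> r = b then
          cnj v * A r a * v + cnj v * A r b * v else 0)"
    by (intro sum.cong refl) (simp add: sum2[OF fin_bits assms])
  also have "\<dots> = cnj v * A a a * v + cnj v * A a b * v + (cnj v * A b a * v + cnj v * A b b * v)"
    by (simp add: sum2[OF fin_bits assms])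
  finally show ?thesis by (simp add: algebra_simps)
qed

definition Lset :: "nat \<Rightarrow> pauli list set" where
  "Lset m = {xs. set xs \<subseteq> {PI,PZ} \<and> length xs = m}"

definition Sset :: "nat \<Rightarrow> pauli list set" where
  "Sset m = Cons PZ ` Lset m"

lemma card_S: "card (Sset m) = 2 ^ m"
proof -
  have "card (Sset m) = card (Lset m)" unfolding Sset_def by (intro card_image) (auto simp: inj_on_def)
  also have "\<dots> = 2 ^ m" unfolding Lset_def by (simp add: card_lists_length_eq numeral_2_eq_2)
  finally show ?thesis .
qed

lemma fin_S: "finite (Sset m)"
  unfolding Sset_def Lset_def using finite_lists_length_eq[of "{PI,PZ}" m] by simp

lemma S_sub: "Sset m \<subseteq> pauli_strings (Suc m)"
  unfolding Sset_def Lset_def pauli_strings_def by auto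

definition cc :: "nat \<Rightarrow> pauli list \<Rightarrow> real" where
  "cc n P = (if P \<in> Sset (n - 1) then 1 else 0)"

lemma ham_S: "ham_mat (Suc m) (cc (Suc m)) r s = (\<Sum>P\<in>Sset m. pstring_mat P r s)"
proof -
  have "ham_mat (Suc m) (cc (Suc m)) r s
     = (\<Sum>P\<in>pauli_strings (Suc m). if P \<in> Sset m then pstring_mat P r s else 0)"
    unfolding ham_mat_def cc_def by (intro sum.cong) auto
  also have "\<dots> = sum (\<lambda>P. pstring_mat P r s) {P\<in>pauli_strings (Suc m). P \<in> Sset m}"
    by (simp add: sum.inter_filter fin_ps)
  also have "{P\<in>pauli_strings (Suc m). P \<in> Sset m} = Sset m" using S_sub by auto
  finally show ?thesis .
qed


lemma S_props: "P \<in> Sset m \<Longrightarrow> length P = Suc m \<and> set P \<subseteq> {PI,PZ} \<and> (\<exists>xs. P = PZ # xs \<and> length xs = m \<and> set xs \<subseteq> {PI,PZ})"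
  unfolding Sset_def Lset_def by auto

lemma H_off:
  assumes "r \<in> bitstrings (Suc m)" "s \<in> bitstrings (Suc m)" "r \<noteq> s"
  shows "ham_mat (Suc m) (cc (Suc m)) r s = 0"
  unfolding ham_S using assms S_props
  by (intro sum.neutral ballI offdiag[where n="Suc m"]) (auto simp: bitstrings_def)

lemma H_aa: "ham_mat (Suc m) (cc (Suc m)) (replicate (Suc m) False) (replicate (Suc m) False) = 2 ^ m"
proof -
  have "ham_mat (Suc m) (cc (Suc m)) (replicate (Suc m) False) (replicate (Suc m) False)
      = (\<Sum>P\<in>Sset m. 1)"
    unfolding ham_S by (intro sum.cong refl diag_a) (auto dest: S_props)
  then show ?thesis by (simp add: card_S)
qed

lemma H_bb: "ham_mat (Suc m) (cc (Suc m)) (True # replicate m False) (True # replicate m False) = - (2 ^ m)"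
proof -
  have "ham_mat (Suc m) (cc (Suc m)) (True # replicate m False) (True # replicate m False)
      = (\<Sum>P\<in>Sset m. -1)"
    unfolding ham_S by (intro sum.cong refl) (auto dest!: S_props intro: diag_b[where xs=xs for xs, simplified])
  then show ?thesis by (simp add: card_S)
qed


lemma mm_row:
  assumes "r \<in> bitstrings n" "\<And>z. z \<in> bitstrings n \<Longrightarrow> H r z = (if z = r then x else 0)"
  shows "mat_mult n H H r s = x * H r s"
proof -
  have "mat_mult n H H r s = (\<Sum>z\<in>bitstrings n. if z = r then x * H z s else 0)"
    unfolding mat_mult_def by (intro sum.cong) (auto simp: assms)
  then show ?thesis using assms(1) fin_bits by simp
qed

definition psi :: "nat \<Rightarrow> bool list \<Rightarrow> complex" where
  "psi n r = (if n = 0 then (if r = [] then 1 else 0) else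
     if r = replicate n False \<or> r = True # replicate (n - 1) False then complex_of_real (1 / sqrt 2) else 0)"

lemma main_m:
  fixes m :: nat
  defines "a \<equiv> False # replicate m False" and "b \<equiv> True # replicate m False"
  shows "Dquant (Suc m) (cc (Suc m)) (psi (Suc m)) = 2 ^ m"
    and "variance (Suc m) (cc (Suc m)) (psi (Suc m)) = (2 ^ m)^2"
    and "is_state (Suc m) (psi (Suc m))"
proof -
  let ?H = "ham_mat (Suc m) (cc (Suc m))"
  let ?v = "complex_of_real (1 / sqrt 2)"
  have abin: "a \<in> bitstrings (Suc m)" "b \<in> bitstrings (Suc m)" "a \<noteq> b"
    unfolding a_def b_def bitstrings_def by auto
  have psi_eq: "psi (Suc m) = (\<lambda>r. if r = a \<or> r = b then ?v else 0)"
    unfolding psi_def a_def b_def by auto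
  have vv: "cnj ?v * ?v = 1/2"
    by (simp flip: of_real_mult)
  have E: "expect (Suc m) (psi (Suc m)) A = (A a a + A a b + A b a + A b b) / 2" for A
    unfolding psi_eq expect_two[OF abin] vv by simp
  have Haa: "?H a a = 2^m" using H_aa unfolding a_def by simp
  have Hbb: "?H b b = - (2^m)" using H_bb unfolding b_def by simp
  have Hab: "?H a b = 0" "?H b a = 0" using H_off abin by auto
  have rowa: "?H a z = (if z = a then 2^m else 0)" if "z \<in> bitstrings (Suc m)" for z
    using H_off[OF abin(1) that] Haa by auto
  have rowb: "?H b z = (if z = b then - (2^m) else 0)" if "z \<in> bitstrings (Suc m)" for z
    using H_off[OF abin(2) that] Hbb by auto
  have EH: "expect (Suc m) (psi (Suc m)) ?H = 0"
    unfolding E Haa Hbb Hab by simp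
  have EH2: "expect (Suc m) (psi (Suc m)) (mat_mult (Suc m) ?H ?H) = (2^m)^2"
  proof -
    have ma: "mat_mult (Suc m) ?H ?H a s = 2^m * ?H a s" for s
      by (rule mm_row[OF abin(1)]) (rule rowa)
    have mb: "mat_mult (Suc m) ?H ?H b s = - (2^m) * ?H b s" for s
      by (rule mm_row[OF abin(2)]) (rule rowb)
    show ?thesis unfolding E ma mb Haa Hbb Hab by (simp add: power2_eq_square)
  qed
  show "variance (Suc m) (cc (Suc m)) (psi (Suc m)) = (2 ^ m)^2"
    unfolding variance_def EH EH2 by simp
  have EP: "expect (Suc m) (psi (Suc m)) (pstring_mat P) = 0" if PS: "P \<in> Sset m" for P
  proof -
    obtain xs where xs: "P = PZ # xs" "length xs = m" "set xs \<subseteq> {PI,PZ}"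
      using S_props[OF PS] by blast
    show ?thesis unfolding E using diag_a[of P "Suc m"] diag_b[OF xs(3)] ab[of xs] xs
      unfolding a_def b_def by simp
  qed
  have "Dquant (Suc m) (cc (Suc m)) (psi (Suc m)) = (\<Sum>P\<in>pauli_strings (Suc m). if P \<in> Sset m then 1 else 0)"
    unfolding Dquant_def cc_def by (intro sum.cong refl) (auto simp: EP)
  also have "\<dots> = real (card {P \<in> pauli_strings (Suc m). P \<in> Sset m})"
    by (simp add: sum.inter_filter[symmetric] fin_ps)
  also have "{P \<in> pauli_strings (Suc m). P \<in> Sset m} = Sset m" using S_sub by auto
  finally show "Dquant (Suc m) (cc (Suc m)) (psi (Suc m)) = 2 ^ m" by (simp add: card_S)
  have "(\<Sum>r\<in>bitstrings (Suc m). (cmod (psi (Suc m) r))\<^sup>2)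
      = (\<Sum>r\<in>bitstrings (Suc m). if r = a \<or> r = b then 1/2 else 0)"
  proof (intro sum.cong refl)
    fix r
    have "cmod ?v = 1 / sqrt 2" by (simp only: norm_of_real) simp
    then have "(cmod ?v)^2 = 1/2" by (simp add: power_divide)
    then show "(cmod (psi (Suc m) r))\<^sup>2 = (if r = a \<or> r = b then 1/2 else 0)"
      unfolding psi_eq by simp
  qed
  also have "\<dots> = 1" using sum2[OF fin_bits abin, of "\<lambda>_. 1/2::real"] by simp
  finally show "is_state (Suc m) (psi (Suc m))" unfolding is_state_def .
qed

theorem proposition1:
  shows "\<exists>(c :: nat \<Rightarrow> pauli list \<Rightarrow> real) (\<psi> :: nat \<Rightarrow> bool list \<Rightarrow> complex).
           (\<forall>n. is_state n (\<psi> n)) \<and>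
           (\<forall>\<^sub>F n in sequentially. variance n (c n) (\<psi> n) > 0) \<and>
           (\<lambda>n. Dquant n (c n) (\<psi> n) / variance n (c n) (\<psi> n)) \<longlonglongrightarrow> 0"
proof (intro exI conjI)
  show "\<forall>n. is_state n (psi n)"
  proof
    fix n show "is_state n (psi n)"
    proof (cases n)
      case 0
      have "bitstrings 0 = {[]}" by (auto simp: bitstrings_def)
      then show ?thesis using 0 by (simp add: is_state_def psi_def)
    next
      case (Suc m) then show ?thesis using main_m(3) by simp
    qed
  qed
  show "\<forall>\<^sub>F n in sequentially. variance n (cc n) (psi n) > 0"
    using eventually_ge_at_top[of "1::nat"]
  proof eventually_elim
    case (elim n) then obtain m where "n = Suc m" by (cases n) auto
    then show ?case using main_m(2)[of m] by simp
  qed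
  have ev: "\<forall>\<^sub>F n in sequentially. (1/2) ^ (n - 1) = Dquant n (cc n) (psi n) / variance n (cc n) (psi n)"
    using eventually_ge_at_top[of "1::nat"]
  proof eventually_elim
    case (elim n) then obtain m where "n = Suc m" by (cases n) auto
    then show ?case using main_m(1,2)[of m] by (simp add: power2_eq_square power_one_over)
  qed
  have "(\<lambda>n. (1/2::real) ^ (n - 1)) \<longlonglongrightarrow> 0"
    by (rule LIMSEQ_offset[where k=1]) (simp add: LIMSEQ_power_zero)
  then show "(\<lambda>n. Dquant n (cc n) (psi n) / variance n (cc n) (psi n)) \<longlonglongrightarrow> 0"
    using ev by (rule Lim_transform_eventually)
qed

end
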